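(* Let $\mathcal{F}$ be a family of pairwise intersecting compact convex sets in the plane. Then for any distinct $A,B,C,D\in\mathcal{F}$, if $o(ABD)=o(BCD)=o(CAD)=1$ then $o(ABC)=1$.
   Context: For three pairwise intersecting compact convex sets $A,B,C$ in the plane: $o(ABC)=0$ if $A\cap B\cap C\neq\emptyset$; otherwise $o(ABC)=o(xyz)$ for any $x\in B\cap C$, $y\in A\cap C$, $z\in A\cap B$, where for points $o(xyz)=+1$ if $x,y,z$ form a counterclockwise triangle and $-1$ if clockwise (this is known to be independent of the choice of $x,y,z$, and the points are never collinear in this case). *)

theory Defs
  imports "HOL-Analysis.Analysis"
begin

definition orient :: "real \<times> real \<Rightarrow> real \<times> real \<Rightarrow> real \<times> real \<Rightarrow> int" where
  "orient x y z =
     (let d = (fst y - fst x) * (snd z - snd x) - (snd y - snd x) * (fst z - fst x)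
      in if d > 0 then 1 else if d < 0 then -1 else 0)"

definition orient_sets :: "(real \<times> real) set \<Rightarrow> (real \<times> real) set \<Rightarrow> (real \<times> real) set \<Rightarrow> int" where
  "orient_sets A B C =
     (if A \<inter> B \<inter> C \<noteq> {} then 0
      else orient (SOME x. x \<in> B \<inter> C) (SOME y. y \<in> A \<inter> C) (SOME z. z \<in> A \<inter> B))"

end

theory Submission
  imports Defs
begin

definition det3 :: "real \<times> real \<Rightarrow> real \<times> real \<Rightarrow> real \<times> real \<Rightarrow> real" where
  "det3 x y z = (fst y - fst x) * (snd z - snd x) - (snd y - snd x) * (fst z - fst x)"

definition hh :: "real \<times> real \<Rightarrow> real \<Rightarrow> real \<times> real \<Rightarrow> real" where
  "hh n k p = fst n * fst p + snd n * snd p - k"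

definition ph :: "real \<times> real \<Rightarrow> real \<times> real \<Rightarrow> real" where
  "ph n p = - snd n * fst p + fst n * snd p"

lemma orient_det: "orient x y z = (if det3 x y z > 0 then 1 else if det3 x y z < 0 then -1 else 0)"
  by (simp add: orient_def det3_def Let_def)

lemma det3_cyc: "det3 x y z = det3 y z x"
  by (simp add: det3_def algebra_simps)

lemma det3_swap: "det3 y x z = - det3 x y z"
  by (simp add: det3_def algebra_simps)

lemma inner_hh: "inner n p - k = hh n k p"
  by (simp add: hh_def inner_prod_def)

lemma KI:
  assumes "hh n k p = 0" "hh n k q = 0"
  shows "(fst n ^ 2 + snd n ^ 2) * det3 q p w = (ph n q - ph n p) * hh n k w"
  using assms unfolding hh_def ph_def det3_def by algebra

lemma SCALE:
  "det3 (z + tq *\<^sub>R (q - z)) (z + tp *\<^sub>R (p - z)) z = tq * tp * det3 q p z"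
  by (simp add: det3_def algebra_simps)

lemma INJ:
  assumes "n \<noteq> 0" "hh n k p = 0" "hh n k q = 0" "ph n p = ph n q"
  shows "p = q"
proof -
  have e1: "fst n * (fst p - fst q) + snd n * (snd p - snd q) = 0" using assms(2,3) by (simp add: hh_def algebra_simps)
  have e2: "- snd n * (fst p - fst q) + fst n * (snd p - snd q) = 0" using assms(4) by (simp add: ph_def algebra_simps)
  have nn: "fst n ^ 2 + snd n ^ 2 > 0"
    using assms(1) by (metis prod_eq_iff zero_prod_def sum_power2_gt_zero_iff fst_zero snd_zero)
  have "(fst n ^ 2 + snd n ^ 2) * (fst p - fst q) = fst n * (fst n * (fst p - fst q) + snd n * (snd p - snd q)) - snd n * (- snd n * (fst p - fst q) + fst n * (snd p - snd q))"
    by (simp add: algebra_simps power2_eq_square)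
  also have "\<dots> = 0" using e1 e2 by simp
  finally have "(fst n ^ 2 + snd n ^ 2) * (fst p - fst q) = 0" .
  hence a: "fst p = fst q" using nn by (metis less_irrefl mult_eq_0_iff right_minus_eq)
  have "(fst n ^ 2 + snd n ^ 2) * (snd p - snd q) = snd n * (fst n * (fst p - fst q) + snd n * (snd p - snd q)) + fst n * (- snd n * (fst p - fst q) + fst n * (snd p - snd q))"
    by (simp add: algebra_simps power2_eq_square)
  also have "\<dots> = 0" using e1 e2 by simp
  finally have "(fst n ^ 2 + snd n ^ 2) * (snd p - snd q) = 0" .
  hence b: "snd p = snd q" using nn by (metis less_irrefl mult_eq_0_iff right_minus_eq)
  show ?thesis using a b by (simp add: prod_eq_iff)
qed

lemma hh_aff: "hh n k (z + t *\<^sub>R (p - z)) = hh n k z + t * (hh n k p - hh n k z)"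
  by (simp add: hh_def algebra_simps)

lemma ph_aff: "ph n (z + t *\<^sub>R (p - z)) = ph n z + t * (ph n p - ph n z)"
  by (simp add: ph_def algebra_simps)

lemma seg_in:
  assumes "convex P" "z \<in> P" "p \<in> P" "0 \<le> t" "t \<le> 1"
  shows "z + t *\<^sub>R (p - z) \<in> P"
proof -
  have "z + t *\<^sub>R (p - z) = (1 - t) *\<^sub>R z + t *\<^sub>R p" by (simp add: algebra_simps)
  thus ?thesis using assms convexD[of P z p "1 - t" t] by simp
qed

lemma CROSS:
  assumes "convex P" "z \<in> P" "p \<in> P" "hh n k z > 0" "hh n k p \<le> 0"
  shows "\<exists>t. 0 < t \<and> t \<le> 1 \<and> z + t *\<^sub>R (p - z) \<in> P \<and> hh n k (z + t *\<^sub>R (p - z)) = 0"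
proof -
  define t where "t = hh n k z / (hh n k z - hh n k p)"
  have d: "hh n k z - hh n k p > 0" using assms by simp
  have t0: "0 < t" unfolding t_def using assms d by simp
  have t1: "t \<le> 1" unfolding t_def using assms d by (simp add: divide_le_eq_1)
  have "hh n k (z + t *\<^sub>R (p - z)) = hh n k z + t * (hh n k p - hh n k z)" by (rule hh_aff)
  also have "\<dots> = 0" unfolding t_def using d by (simp add: field_simps)
  finally show ?thesis using t0 t1 seg_in[OF assms(1,2,3)] by (intro exI[of _ t]) auto
qed

definition Sep :: "real \<times> real \<Rightarrow> real \<Rightarrow> (real \<times> real) set \<Rightarrow> (real \<times> real) set \<Rightarrow> bool" where
  "Sep n k P Q = (\<forall>p\<in>P. \<forall>q\<in>Q. hh n k p = 0 \<longrightarrow> hh n k q = 0 \<longrightarrow> ph n p < ph n q)"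

lemma OVERLAP:
  assumes "n \<noteq> 0" "convex P" "convex Q" "p1 \<in> P" "p2 \<in> P" "q1 \<in> Q" "q2 \<in> Q"
    "hh n k p1 = 0" "hh n k p2 = 0" "hh n k q1 = 0" "hh n k q2 = 0"
    "ph n p1 < ph n q1" "ph n q2 \<le> ph n p2"
  shows "\<exists>r\<in>P \<inter> Q. hh n k r = 0"
proof -
  define f0 where "f0 = ph n q1 - ph n p1"
  define f1 where "f1 = ph n q2 - ph n p2"
  have f0p: "f0 > 0" "f1 \<le> 0" using assms unfolding f0_def f1_def by auto
  define l where "l = f0 / (f0 - f1)"
  have l0: "0 \<le> l" "l \<le> 1" unfolding l_def using f0p by (auto simp: divide_le_eq_1)
  define rp where "rp = p1 + l *\<^sub>R (p2 - p1)"
  define rq where "rq = q1 + l *\<^sub>R (q2 - q1)"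
  have rpP: "rp \<in> P" unfolding rp_def using seg_in[OF assms(2,4,5) l0] .
  have rqQ: "rq \<in> Q" unfolding rq_def using seg_in[OF assms(3,6,7) l0] .
  have hp: "hh n k rp = 0" unfolding rp_def hh_aff using assms by simp
  have hq: "hh n k rq = 0" unfolding rq_def hh_aff using assms by simp
  have "ph n rq - ph n rp = f0 + l * (f1 - f0)"
    unfolding rp_def rq_def ph_aff f0_def f1_def by (simp add: algebra_simps)
  also have "\<dots> = 0" unfolding l_def using f0p by (simp add: field_simps)
  finally have "ph n rp = ph n rq" by simp
  hence "rp = rq" using INJ[OF assms(1) hp hq] by simp
  thus ?thesis using rpP rqQ hp by auto
qed

lemma ORD:
  assumes "n \<noteq> 0" "convex P" "convex Q" "\<forall>r\<in>P \<inter> Q. hh n k r \<noteq> 0"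
    "p1 \<in> P" "q1 \<in> Q" "hh n k p1 = 0" "hh n k q1 = 0" "ph n p1 < ph n q1"
  shows "Sep n k P Q"
  unfolding Sep_def
proof (intro ballI impI)
  fix p q assume pq: "p \<in> P" "q \<in> Q" "hh n k p = 0" "hh n k q = 0"
  show "ph n p < ph n q"
  proof (rule ccontr)
    assume "\<not> ph n p < ph n q"
    hence "ph n q \<le> ph n p" by simp
    then obtain r where "r \<in> P \<inter> Q" "hh n k r = 0"
      using OVERLAP[OF assms(1,2,3,5) pq(1) assms(6) pq(2) assms(7) pq(3) assms(8) pq(4) assms(9)] by blast
    thus False using assms(4) by blast
  qed
qed

lemma nn_pos: "n \<noteq> 0 \<Longrightarrow> fst n ^ 2 + snd n ^ 2 > (0::real)"
  by (metis prod_eq_iff sum_power2_gt_zero_iff fst_zero snd_zero)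

lemma TRI:
  assumes "n \<noteq> 0" "convex P" "convex Q" "z \<in> P" "z \<in> Q" "hh n k z > 0"
    "p \<in> P" "q \<in> Q" "hh n k p \<le> 0" "hh n k q \<le> 0" "Sep n k P Q"
  shows "det3 q p z > 0"
proof -
  obtain tp where tp: "0 < tp" "z + tp *\<^sub>R (p - z) \<in> P" "hh n k (z + tp *\<^sub>R (p - z)) = 0"
    using CROSS[OF assms(2,4,7,6,9)] by blast
  obtain tq where tq: "0 < tq" "z + tq *\<^sub>R (q - z) \<in> Q" "hh n k (z + tq *\<^sub>R (q - z)) = 0"
    using CROSS[OF assms(3,5,8,6,10)] by blast
  let ?p = "z + tp *\<^sub>R (p - z)" and ?q = "z + tq *\<^sub>R (q - z)"
  have lt: "ph n ?p < ph n ?q" using assms(11) tp tq unfolding Sep_def by blast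
  have "(fst n ^ 2 + snd n ^ 2) * det3 ?q ?p z = (ph n ?q - ph n ?p) * hh n k z"
    using KI[OF tp(3) tq(3)] .
  moreover have "(ph n ?q - ph n ?p) * hh n k z > 0" using lt assms(6) by simp
  ultimately have "0 < (fst n ^ 2 + snd n ^ 2) * det3 ?q ?p z" by simp
  hence "det3 ?q ?p z > 0" using nn_pos[OF assms(1)] zero_less_mult_pos by blast
  hence "tq * tp * det3 q p z > 0" using SCALE by metis
  moreover have "tq * tp > 0" using tp(1) tq(1) by simp
  ultimately show ?thesis using zero_less_mult_pos by blast
qed

lemma KEY:
  assumes "n \<noteq> 0" "convex P" "convex Q" "z \<in> P" "z \<in> Q" "hh n k z > 0"
    "p \<in> P" "q \<in> Q" "hh n k p \<le> 0" "hh n k q \<le> 0" "\<forall>r\<in>P \<inter> Q. hh n k r \<noteq> 0"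
  shows "Sep n k P Q \<or> Sep n k Q P"
proof -
  obtain tp where tp: "0 < tp" "z + tp *\<^sub>R (p - z) \<in> P" "hh n k (z + tp *\<^sub>R (p - z)) = 0"
    using CROSS[OF assms(2,4,7,6,9)] by blast
  obtain tq where tq: "0 < tq" "z + tq *\<^sub>R (q - z) \<in> Q" "hh n k (z + tq *\<^sub>R (q - z)) = 0"
    using CROSS[OF assms(3,5,8,6,10)] by blast
  let ?p = "z + tp *\<^sub>R (p - z)" and ?q = "z + tq *\<^sub>R (q - z)"
  have "ph n ?p \<noteq> ph n ?q"
  proof
    assume "ph n ?p = ph n ?q"
    hence "?p = ?q" using INJ[OF assms(1) tp(3) tq(3)] by simp
    thus False using assms(11) tp tq by auto
  qed
  hence "ph n ?p < ph n ?q \<or> ph n ?q < ph n ?p" by linarith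
  moreover have "\<forall>r\<in>Q \<inter> P. hh n k r \<noteq> 0" using assms(11) by blast
  ultimately show ?thesis
    using ORD[OF assms(1,2,3,11) tp(2) tq(2) tp(3) tq(3)] ORD[OF assms(1,3,2) _ tq(2) tp(2) tq(3) tp(3)]
    by blast
qed

lemma hh_neg: "hh (-n) (-k) p = - hh n k p" by (simp add: hh_def)
lemma ph_neg: "ph (-n) p = - ph n p" by (simp add: ph_def)

lemma Sep_neg: "Sep (-n) (-k) P Q = Sep n k Q P"
  unfolding Sep_def hh_neg ph_neg by auto

lemma Sep_trans:
  assumes "Sep n k P Q" "Sep n k Q R" "q0 \<in> Q" "hh n k q0 = 0"
  shows "Sep n k P R"
  using assms unfolding Sep_def by (meson less_trans)

lemma some_wit: "S \<noteq> {} \<Longrightarrow> (SOME x. x \<in> S) \<in> S"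
  by (simp add: some_in_eq)

lemma INDEP:
  assumes "compact P" "convex P" "compact Q" "convex Q" "compact R" "convex R"
    "P \<inter> Q \<inter> R = {}"
    "x \<in> Q \<inter> R" "y \<in> P \<inter> R" "z \<in> P \<inter> Q"
    "x' \<in> Q \<inter> R" "y' \<in> P \<inter> R" "z' \<in> P \<inter> Q"
  shows "orient x y z = orient x' y' z'"
proof -
  have ne: "P \<inter> Q \<noteq> {}" using assms(10) by blast
  have "R \<inter> (P \<inter> Q) = {}" using assms(7) by blast
  then obtain a b where ab: "\<forall>x\<in>R. inner a x < b" "\<forall>x\<in>P \<inter> Q. inner a x > b"
    using separating_hyperplane_closed_compact[of R "P \<inter> Q"] assms(1-6) ne
    by (meson compact_Int compact_imp_closed convex_Int)
  have hR: "\<And>u. u \<in> R \<Longrightarrow> hh a b u < 0"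
  proof -
    fix u assume "u \<in> R" hence "inner a u < b" using ab(1) by blast
    thus "hh a b u < 0" using inner_hh[of a u b] by linarith
  qed
  have hPQ: "\<And>u. u \<in> P \<inter> Q \<Longrightarrow> hh a b u > 0"
  proof -
    fix u assume "u \<in> P \<inter> Q" hence "inner a u > b" using ab(2) by blast
    thus "hh a b u > 0" using inner_hh[of a u b] by linarith
  qed
  have a0: "a \<noteq> 0"
  proof
    assume "a = 0"
    moreover have "inner a x < b" using ab(1) assms(8) by blast
    moreover have "inner a z > b" using ab(2) assms(10) by blast
    ultimately show False by simp
  qed
  have nz: "\<forall>r\<in>P \<inter> Q. hh a b r \<noteq> 0" using hPQ by force
  have "Sep a b P Q \<or> Sep a b Q P"
    using KEY[OF a0 assms(2,4), where z=z and p=y and q=x and k=b] assms(8-10) hPQ[of z] hR[of x] hR[of y] nz by auto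
  thus ?thesis
  proof
    assume S: "Sep a b P Q"
    have "det3 x y z > 0"
      using TRI[OF a0 assms(2,4), where z=z and p=y and q=x and k=b] assms(8-10) hPQ[of z] hR[of x] hR[of y] S by auto
    moreover have "det3 x' y' z' > 0"
      using TRI[OF a0 assms(2,4), where z=z' and p=y' and q=x' and k=b] assms(11-13) hPQ[of z'] hR[of x'] hR[of y'] S by auto
    ultimately show ?thesis by (simp add: orient_det)
  next
    assume S: "Sep a b Q P"
    have "det3 y x z > 0"
      using TRI[OF a0 assms(4,2), where z=z and p=x and q=y and k=b] assms(8-10) hPQ[of z] hR[of x] hR[of y] S by auto
    moreover have "det3 y' x' z' > 0"
      using TRI[OF a0 assms(4,2), where z=z' and p=x' and q=y' and k=b] assms(11-13) hPQ[of z'] hR[of x'] hR[of y'] S by auto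
    ultimately show ?thesis by (simp add: orient_det det3_swap[of y x] det3_swap[of y' x'])
  qed
qed

lemma OSETS:
  assumes "compact P" "convex P" "compact Q" "convex Q" "compact R" "convex R"
    "P \<inter> Q \<noteq> {}" "P \<inter> R \<noteq> {}" "Q \<inter> R \<noteq> {}" "P \<inter> Q \<inter> R = {}"
    "x \<in> Q \<inter> R" "y \<in> P \<inter> R" "z \<in> P \<inter> Q"
  shows "orient_sets P Q R = orient x y z"
proof -
  have "orient_sets P Q R = orient (SOME x. x \<in> Q \<inter> R) (SOME y. y \<in> P \<inter> R) (SOME z. z \<in> P \<inter> Q)"
    unfolding orient_sets_def using assms(10) by simp
  also have "\<dots> = orient x y z"
    by (rule INDEP[OF assms(1-6,10) some_wit some_wit some_wit assms(11-13)]) (use assms(7-9) in auto)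
  finally show ?thesis .
qed

lemma bary:
  fixes a b c q :: "real \<times> real"
  defines "d1 \<equiv> det3 b a q" and "d2 \<equiv> det3 c b q" and "d3 \<equiv> det3 a c q"
  shows "(d1 + d2 + d3) * fst q = d2 * fst a + d3 * fst b + d1 * fst c"
    and "(d1 + d2 + d3) * snd q = d2 * snd a + d3 * snd b + d1 * snd c"
  unfolding d1_def d2_def d3_def det3_def by algebra+

lemma in_tri:
  fixes a b c q :: "real \<times> real"
  assumes "convex D" "a \<in> D" "b \<in> D" "c \<in> D"
    "det3 b a q > 0" "det3 c b q > 0" "det3 a c q > 0"
  shows "q \<in> D"
proof -
  define d1 where "d1 = det3 b a q"
  define d2 where "d2 = det3 c b q"
  define d3 where "d3 = det3 a c q"
  define s where "s = d1 + d2 + d3"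
  have pos: "d1 > 0" "d2 > 0" "d3 > 0" "s > 0" using assms(5-7) unfolding d1_def d2_def d3_def s_def by auto
  have e1: "s * fst q = d2 * fst a + d3 * fst b + d1 * fst c"
    using bary(1)[of b a q c] unfolding d1_def d2_def d3_def s_def .
  have e2: "s * snd q = d2 * snd a + d3 * snd b + d1 * snd c"
    using bary(2)[of b a q c] unfolding d1_def d2_def d3_def s_def .
  have "q = (d2 / s) *\<^sub>R a + (d3 / s) *\<^sub>R b + (d1 / s) *\<^sub>R c"
  proof (rule prod_eqI)
    show "fst q = fst ((d2 / s) *\<^sub>R a + (d3 / s) *\<^sub>R b + (d1 / s) *\<^sub>R c)"
      using e1 pos(4) by (simp add: field_simps)
    show "snd q = snd ((d2 / s) *\<^sub>R a + (d3 / s) *\<^sub>R b + (d1 / s) *\<^sub>R c)"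
      using e2 pos(4) by (simp add: field_simps)
  qed
  moreover have "(d2 / s) *\<^sub>R a + (d3 / s) *\<^sub>R b + (d1 / s) *\<^sub>R c \<in> convex hull {a, b, c}"
  proof -
    have "0 \<le> d2 / s" "0 \<le> d3 / s" "0 \<le> d1 / s" using pos by auto
    moreover have "d2 / s + d3 / s + d1 / s = (d2 + d3 + d1) / s" by (simp add: add_divide_distrib)
    moreover have "(d2 + d3 + d1) / s = 1" using pos(4) unfolding s_def by (simp add: add_ac)
    ultimately have hs: "0 \<le> d2 / s" "0 \<le> d3 / s" "0 \<le> d1 / s" "d2 / s + d3 / s + d1 / s = 1" by auto
    show ?thesis unfolding convex_hull_3
      by (rule CollectI, rule exI[of _ "d2/s"], rule exI[of _ "d3/s"], rule exI[of _ "d1/s"]) (use hs in auto)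
  qed
  moreover have "convex hull {a, b, c} \<subseteq> D" using assms(1-4) by (simp add: hull_minimal)
  ultimately show ?thesis by auto
qed

theorem lemma2:
  fixes \<F> :: "(real \<times> real) set set"
  assumes cc: "\<And>S. S \<in> \<F> \<Longrightarrow> compact S \<and> convex S"
    and pw: "\<And>S T. S \<in> \<F> \<Longrightarrow> T \<in> \<F> \<Longrightarrow> S \<inter> T \<noteq> {}"
    and mem: "A \<in> \<F>" "B \<in> \<F>" "C \<in> \<F>" "D \<in> \<F>"
    and dist: "distinct [A, B, C, D]"
    and h: "orient_sets A B D = 1" "orient_sets B C D = 1" "orient_sets C A D = 1"
  shows "orient_sets A B C = 1"
proof -
  have kA: "compact A" "convex A" using cc mem by auto
  have kB: "compact B" "convex B" using cc mem by auto
  have kC: "compact C" "convex C" using cc mem by auto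
  have kD: "compact D" "convex D" using cc mem by auto
  have ne: "A \<inter> B \<noteq> {}" "A \<inter> C \<noteq> {}" "A \<inter> D \<noteq> {}" "B \<inter> C \<noteq> {}" "B \<inter> D \<noteq> {}" "C \<inter> D \<noteq> {}"
    "C \<inter> A \<noteq> {}"
    using pw mem by auto
  have ABD: "A \<inter> B \<inter> D = {}"
  proof (rule ccontr)
    assume "A \<inter> B \<inter> D \<noteq> {}" hence "orient_sets A B D = 0" by (simp add: orient_sets_def)
    thus False using h(1) by simp
  qed
  have BCD: "B \<inter> C \<inter> D = {}"
  proof (rule ccontr)
    assume "B \<inter> C \<inter> D \<noteq> {}" hence "orient_sets B C D = 0" by (simp add: orient_sets_def)
    thus False using h(2) by simp
  qed
  have CAD: "C \<inter> A \<inter> D = {}"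
  proof (rule ccontr)
    assume "C \<inter> A \<inter> D \<noteq> {}" hence "orient_sets C A D = 0" by (simp add: orient_sets_def)
    thus False using h(3) by simp
  qed
  have O1: "det3 x y z > 0" if "x \<in> B \<inter> D" "y \<in> A \<inter> D" "z \<in> A \<inter> B" for x y z
  proof -
    have "orient x y z = 1"
      using OSETS[OF kA kB kD ne(1,3,5) ABD that] h(1) by simp
    thus ?thesis by (simp add: orient_det split: if_splits)
  qed
  have O2: "det3 x y z > 0" if "x \<in> C \<inter> D" "y \<in> B \<inter> D" "z \<in> B \<inter> C" for x y z
  proof -
    have "orient x y z = 1"
      using OSETS[OF kB kC kD ne(4,5,6) BCD that] h(2) by simp
    thus ?thesis by (simp add: orient_det split: if_splits)
  qed
  have O3: "det3 x y z > 0" if "x \<in> A \<inter> D" "y \<in> C \<inter> D" "z \<in> C \<inter> A" for x y z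
  proof -
    have "orient x y z = 1"
      using OSETS[OF kC kA kD ne(7) _ ne(3) CAD that] ne(6) h(3) by (simp add: Int_commute)
    thus ?thesis by (simp add: orient_det split: if_splits)
  qed
  obtain a0 where a0: "a0 \<in> A \<inter> D" using ne by blast
  obtain b0 where b0: "b0 \<in> B \<inter> D" using ne by blast
  obtain c0 where c0: "c0 \<in> C \<inter> D" using ne by blast
  obtain z0 where z0: "z0 \<in> A \<inter> B" using ne by blast
  obtain x1 where x1: "x1 \<in> B \<inter> C" using ne by blast
  obtain y2 where y2: "y2 \<in> C \<inter> A" using ne by blast
  have ABC: "A \<inter> B \<inter> C = {}"
  proof (rule ccontr)
    assume "A \<inter> B \<inter> C \<noteq> {}"
    then obtain q where q: "q \<in> A" "q \<in> B" "q \<in> C" by blast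
    have "det3 b0 a0 q > 0" using O1[OF b0 a0] q by simp
    moreover have "det3 c0 b0 q > 0" using O2[OF c0 b0] q by simp
    moreover have "det3 a0 c0 q > 0" using O3[OF a0 c0] q by simp
    ultimately have "q \<in> D" using in_tri[OF kD(2)] a0 b0 c0 by blast
    thus False using q ABD by blast
  qed
  have goal: "orient_sets A B C = 1" if "x \<in> B \<inter> C" "y \<in> A \<inter> C" "z \<in> A \<inter> B" "det3 x y z > 0" for x y z
    using OSETS[OF kA kB kC ne(1,2,4) ABC that(1-3)] that(4) by (simp add: orient_det)
  have "D \<inter> (A \<inter> B) = {}" using ABD by blast
  then obtain n k where nk: "\<forall>x\<in>D. inner n x < k" "\<forall>x\<in>A \<inter> B. inner n x > k"
    using separating_hyperplane_closed_compact[of D "A \<inter> B"] kA kB kD ne(1)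
    by (meson compact_Int compact_imp_closed convex_Int)
  have hD: "hh n k u < 0" if "u \<in> D" for u
    using nk(1) that inner_hh[of n u k] by force
  have hAB: "hh n k u > 0" if "u \<in> A \<inter> B" for u
    using nk(2) that inner_hh[of n u k] by force
  have n0: "n \<noteq> 0"
  proof
    assume "n = 0"
    moreover have "inner n a0 < k" using nk(1) a0 by blast
    moreover have "inner n z0 > k" using nk(2) z0 by blast
    ultimately show False by simp
  qed
  have nzAB: "\<forall>r\<in>A \<inter> B. hh n k r \<noteq> 0" using hAB by force
  have SAB: "Sep n k A B"
  proof -
    have "Sep n k A B \<or> Sep n k B A"
      using KEY[OF n0 kA(2) kB(2), where z=z0 and p=a0 and q=b0 and k=k] z0 a0 b0 hAB[OF z0] hD[of a0] hD[of b0] nzAB by auto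
    moreover have "\<not> Sep n k B A"
    proof
      assume "Sep n k B A"
      hence "det3 a0 b0 z0 > 0"
        using TRI[OF n0 kB(2) kA(2), where z=z0 and p=b0 and q=a0 and k=k] z0 a0 b0 hAB[OF z0] hD[of a0] hD[of b0] by auto
      moreover have "det3 b0 a0 z0 > 0" using O1 b0 a0 z0 by blast
      ultimately show False using det3_swap[of b0 a0 z0] by linarith
    qed
    ultimately show ?thesis by blast
  qed
  obtain ta where ta: "0 < ta" "z0 + ta *\<^sub>R (a0 - z0) \<in> A" "hh n k (z0 + ta *\<^sub>R (a0 - z0)) = 0"
    using CROSS[OF kA(2), of z0 a0 n k] z0 a0 hAB[OF z0] hD[of a0] by auto
  obtain tb where tb: "0 < tb" "z0 + tb *\<^sub>R (b0 - z0) \<in> B" "hh n k (z0 + tb *\<^sub>R (b0 - z0)) = 0"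
    using CROSS[OF kB(2), of z0 b0 n k] z0 b0 hAB[OF z0] hD[of b0] by auto
  have SBC: "Sep n k B C" if allBC: "\<forall>x\<in>B \<inter> C. hh n k x > 0"
  proof -
    have nz: "\<forall>r\<in>B \<inter> C. hh n k r \<noteq> 0" using allBC by force
    have "Sep n k B C \<or> Sep n k C B"
      using KEY[OF n0 kB(2) kC(2), where z=x1 and p=b0 and q=c0 and k=k] x1 b0 c0 allBC hD[of b0] hD[of c0] nz by auto
    moreover have "\<not> Sep n k C B"
    proof
      assume "Sep n k C B"
      hence "det3 b0 c0 x1 > 0"
        using TRI[OF n0 kC(2) kB(2), where z=x1 and p=c0 and q=b0 and k=k] x1 b0 c0 allBC hD[of b0] hD[of c0] by auto
      moreover have "det3 c0 b0 x1 > 0" using O2 c0 b0 x1 by blast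
      ultimately show False using det3_swap[of c0 b0 x1] by linarith
    qed
    ultimately show ?thesis by blast
  qed
  have SCA: "Sep n k C A" if allCA: "\<forall>y\<in>C \<inter> A. hh n k y > 0"
  proof -
    have nz: "\<forall>r\<in>C \<inter> A. hh n k r \<noteq> 0" using allCA by force
    have "Sep n k C A \<or> Sep n k A C"
      using KEY[OF n0 kC(2) kA(2), where z=y2 and p=c0 and q=a0 and k=k] y2 a0 c0 allCA hD[of a0] hD[of c0] nz by auto
    moreover have "\<not> Sep n k A C"
    proof
      assume "Sep n k A C"
      hence "det3 c0 a0 y2 > 0"
        using TRI[OF n0 kA(2) kC(2), where z=y2 and p=a0 and q=c0 and k=k] y2 a0 c0 allCA hD[of a0] hD[of c0] by auto
      moreover have "det3 a0 c0 y2 > 0" using O3 a0 c0 y2 by blast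
      ultimately show False using det3_swap[of a0 c0 y2] by linarith
    qed
    ultimately show ?thesis by blast
  qed
  have n0': "- n \<noteq> 0" using n0 by simp
  show ?thesis
  proof (cases "\<exists>x\<in>B \<inter> C. hh n k x \<le> 0")
    case True
    then obtain x where x: "x \<in> B \<inter> C" "hh n k x \<le> 0" by blast
    show ?thesis
    proof (cases "\<exists>y\<in>C \<inter> A. hh n k y \<le> 0")
      case True
      then obtain y where y: "y \<in> C \<inter> A" "hh n k y \<le> 0" by blast
      have "det3 x y z0 > 0"
        using TRI[OF n0 kA(2) kB(2), where z=z0 and p=y and q=x and k=k] z0 x y hAB[OF z0] SAB by auto
      thus ?thesis using goal[of x y z0] x y z0 by blast
    next
      case False
      hence allCA: "\<forall>y\<in>C \<inter> A. hh n k y > 0" by force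
      have SCB: "Sep n k C B" using Sep_trans[OF SCA[OF allCA] SAB ta(2,3)] .
      have "hh n k x \<noteq> 0"
      proof
        assume "hh n k x = 0"
        thus False using SCB x unfolding Sep_def by blast
      qed
      hence hx: "hh (-n) (-k) x > 0" using x(2) hh_neg[of n k x] by simp
      have "det3 y2 z0 x > 0"
        using TRI[OF n0' kB(2) kC(2), where z=x and p=z0 and q=y2 and k="-k"] x z0 y2 hx
          hh_neg[of n k z0] hh_neg[of n k y2] hAB[OF z0] allCA[rule_format, of y2] Sep_neg[of n k B C] SCB by auto
      hence "det3 x y2 z0 > 0" using det3_cyc[of x y2 z0] by simp
      thus ?thesis using goal[of x y2 z0] x y2 z0 by blast
    qed
  next
    case False
    hence allBC: "\<forall>x\<in>B \<inter> C. hh n k x > 0" by force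
    have SBC': "Sep n k B C" using SBC[OF allBC] .
    show ?thesis
    proof (cases "\<exists>y\<in>C \<inter> A. hh n k y \<le> 0")
      case True
      then obtain y where y: "y \<in> C \<inter> A" "hh n k y \<le> 0" by blast
      have SAC: "Sep n k A C" using Sep_trans[OF SAB SBC' tb(2,3)] .
      have "hh n k y \<noteq> 0"
      proof
        assume "hh n k y = 0"
        thus False using SAC y unfolding Sep_def by blast
      qed
      hence hy: "hh (-n) (-k) y > 0" using y(2) hh_neg[of n k y] by simp
      have "det3 z0 x1 y > 0"
        using TRI[OF n0' kC(2) kA(2), where z=y and p=x1 and q=z0 and k="-k"] x1 z0 y hy
          hh_neg[of n k z0] hh_neg[of n k x1] hAB[OF z0] allBC[rule_format, of x1] Sep_neg[of n k C A] SAC by auto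
      hence "det3 x1 y z0 > 0" using det3_cyc[of x1 y z0] det3_cyc[of y z0 x1] by simp
      thus ?thesis using goal[of x1 y z0] x1 y z0 by blast
    next
      case False
      hence allCA: "\<forall>y\<in>C \<inter> A. hh n k y > 0" by force
      have SCA': "Sep n k C A" using SCA[OF allCA] .
      obtain tc where tc: "0 < tc" "x1 + tc *\<^sub>R (c0 - x1) \<in> C" "hh n k (x1 + tc *\<^sub>R (c0 - x1)) = 0"
        using CROSS[OF kC(2), of x1 c0 n k] x1 c0 allBC hD[of c0] by auto
      let ?a = "z0 + ta *\<^sub>R (a0 - z0)" and ?b = "z0 + tb *\<^sub>R (b0 - z0)" and ?c = "x1 + tc *\<^sub>R (c0 - x1)"
      have "ph n ?a < ph n ?b" using SAB ta tb unfolding Sep_def by blast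
      moreover have "ph n ?b < ph n ?c" using SBC' tb tc unfolding Sep_def by blast
      moreover have "ph n ?c < ph n ?a" using SCA' ta tc unfolding Sep_def by blast
      ultimately show ?thesis by linarith
    qed
  qed
qed

end
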